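(* Let $H$ be a real Hilbert space, $C\subseteq H$ nonempty, $\varphi:[0,\infty)\to[0,\infty)$ an increasing function vanishing only at $0$, and $A:H\to2^H$ a maximally monotone operator which is uniformly monotone on $C$ with modulus $\varphi$. Let $\gamma>0$ be such that $J_{\gamma A}(C)\subseteq C$. Then $J_{\gamma A}$ is uniformly firmly nonexpansive on $C$ with modulus $\gamma\varphi$.
   Context: $J_{\gamma A}:=(id_H+\gamma A)^{-1}$ (single-valued on $H$). $A$ is uniformly monotone on $C$ with modulus $\varphi$ if for all $x,y\in C$ and $u\in A(x)$, $v\in A(y)$: $\langle x-y,u-v\rangle\ge\varphi(\|x-y\|)$. A map $T$ is uniformly firmly nonexpansive on $C$ with modulus $\phi$ if $T(C)\subseteq C$ and for all $x,y\in C$, $t\in[0,1]$: $\|Tx-Ty\|^2\le\|((1-t)x+tTx)-((1-t)y+tTy)\|^2-2(1-t)\phi(\|Tx-Ty\|)$. *)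

theory Defs
  imports "HOL-Analysis.Analysis"
begin

definition monotone_op :: "('a::real_inner \<Rightarrow> 'a set) \<Rightarrow> bool" where
  "monotone_op A \<longleftrightarrow>
     (\<forall>x y u v. u \<in> A x \<longrightarrow> v \<in> A y \<longrightarrow> inner (x - y) (u - v) \<ge> 0)"

definition maximally_monotone :: "('a::real_inner \<Rightarrow> 'a set) \<Rightarrow> bool" where
  "maximally_monotone A \<longleftrightarrow> monotone_op A \<and>
     (\<forall>B. monotone_op B \<and> (\<forall>x. A x \<subseteq> B x) \<longrightarrow> B = A)"

definition uniformly_monotone_on ::
  "'a set \<Rightarrow> (real \<Rightarrow> real) \<Rightarrow> ('a::real_inner \<Rightarrow> 'a set) \<Rightarrow> bool" where
  "uniformly_monotone_on C \<phi> A \<longleftrightarrow>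
     (\<forall>x\<in>C. \<forall>y\<in>C. \<forall>u\<in>A x. \<forall>v\<in>A y. inner (x - y) (u - v) \<ge> \<phi> (norm (x - y)))"

text \<open>Resolvent J_{\<gamma>A} = (id + \<gamma>A)^{-1}: J x is the (unique, for maximally monotone A)
  point p with x \<in> p + \<gamma> A p.\<close>
definition resolvent :: "real \<Rightarrow> ('a::real_inner \<Rightarrow> 'a set) \<Rightarrow> 'a \<Rightarrow> 'a" where
  "resolvent \<gamma> A x = (THE p. \<exists>u\<in>A p. x = p + \<gamma> *\<^sub>R u)"

definition uniformly_firmly_nonexpansive_on ::
  "'a set \<Rightarrow> (real \<Rightarrow> real) \<Rightarrow> ('a::real_inner \<Rightarrow> 'a) \<Rightarrow> bool" where
  "uniformly_firmly_nonexpansive_on C \<phi> T \<longleftrightarrow> T ` C \<subseteq> C \<and>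
     (\<forall>x\<in>C. \<forall>y\<in>C. \<forall>t\<in>{0..1::real}.
        (norm (T x - T y))\<^sup>2 \<le>
          (norm (((1 - t) *\<^sub>R x + t *\<^sub>R T x) - ((1 - t) *\<^sub>R y + t *\<^sub>R T y)))\<^sup>2
          - 2 * (1 - t) * \<phi> (norm (T x - T y)))"

end

theory Submission imports Defs begin

lemma dsum:
  fixes a :: "'b \<Rightarrow> 'a::real_inner"
  assumes "finite S" "sum u S = 1"
  shows "(\<Sum>q\<in>S. \<Sum>r\<in>S. u q * u r * (norm (a q - a r))\<^sup>2)
     = 2 * (\<Sum>q\<in>S. u q * (norm (a q))\<^sup>2) - 2 * (norm (\<Sum>q\<in>S. u q *\<^sub>R a q))\<^sup>2"
proof -
  have e: "\<And>q r. u q * u r * (norm (a q - a r))\<^sup>2 = u r * (u q * (norm (a q))\<^sup>2) + u q * (u r * (norm (a r))\<^sup>2) - 2 * inner (u q *\<^sub>R a q) (u r *\<^sub>R a r)"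
    by (simp add: power2_norm_eq_inner inner_diff_left inner_diff_right inner_commute algebra_simps)
  have s1: "(\<Sum>q\<in>S. \<Sum>r\<in>S. u r * (u q * (norm (a q))\<^sup>2)) = (\<Sum>q\<in>S. u q * (norm (a q))\<^sup>2)"
    by (simp add: sum_distrib_right[symmetric] assms)
  have s2: "(\<Sum>q\<in>S. \<Sum>r\<in>S. u q * (u r * (norm (a r))\<^sup>2)) = (\<Sum>q\<in>S. u q * (norm (a q))\<^sup>2)"
    by (simp add: sum_distrib_left[symmetric] sum_distrib_right[symmetric] assms)
  have s3: "(\<Sum>q\<in>S. \<Sum>r\<in>S. inner (u q *\<^sub>R a q) (u r *\<^sub>R a r)) = (norm (\<Sum>q\<in>S. u q *\<^sub>R a q))\<^sup>2"
    unfolding power2_norm_eq_inner inner_sum_left by (simp only: inner_sum_right)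
  have "(\<Sum>q\<in>S. \<Sum>r\<in>S. u q * u r * (norm (a q - a r))\<^sup>2) = (\<Sum>q\<in>S. \<Sum>r\<in>S. u r * (u q * (norm (a q))\<^sup>2)) + (\<Sum>q\<in>S. \<Sum>r\<in>S. u q * (u r * (norm (a r))\<^sup>2)) - 2 * (\<Sum>q\<in>S. \<Sum>r\<in>S. inner (u q *\<^sub>R a q) (u r *\<^sub>R a r))"
    unfolding e by (simp add: sum_subtractf sum.distrib sum_distrib_left)
  then show ?thesis using s1 s2 s3 by simp
qed

lemma norm_add_scale:
  fixes a d :: "'a::real_inner"
  shows "(norm (a + e *\<^sub>R d))\<^sup>2 = (norm a)\<^sup>2 + 2*e*inner a d + e\<^sup>2*(norm d)\<^sup>2"
  unfolding power2_norm_eq_inner by (simp add: inner_add_left inner_add_right inner_commute power2_eq_square algebra_simps)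

lemma finite_ext:
  fixes S :: "('a::real_inner \<times> 'a \<times> real) set" and z :: 'a
  assumes fin: "finite S"
    and w: "\<And>q. q \<in> S \<Longrightarrow> snd (snd q) = (norm (fst q))\<^sup>2 - (norm (z - fst (snd q)))\<^sup>2"
    and ne: "\<And>q r. q \<in> S \<Longrightarrow> r \<in> S \<Longrightarrow> norm (fst q - fst r) \<le> norm (fst (snd q) - fst (snd r))"
  shows "\<exists>t. \<forall>q\<in>S. norm (t - fst q) \<le> norm (z - fst (snd q))"
proof (cases "S = {}")
  case True then show ?thesis by auto
next
  case False
  define K where "K = convex hull S"
  define \<Psi> where "\<Psi> = (\<lambda>y::'a\<times>'a\<times>real. snd (snd y) - (norm (fst y))\<^sup>2)"
  have "compact K" unfolding K_def by (rule finite_imp_compact_convex_hull[OF fin])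
  moreover have "K \<noteq> {}" using False unfolding K_def by simp
  moreover have "continuous_on K \<Psi>" unfolding \<Psi>_def by (intro continuous_intros)
  ultimately obtain y where yK: "y \<in> K" and ymax: "\<And>y'. y' \<in> K \<Longrightarrow> \<Psi> y' \<le> \<Psi> y"
    using continuous_attains_sup by metis
  from yK obtain u where u0: "\<forall>x\<in>S. 0 \<le> u x" and u1: "sum u S = 1" and uy: "(\<Sum>x\<in>S. u x *\<^sub>R x) = y"
    unfolding K_def convex_hull_finite[OF fin] by blast
  define ts where "ts = fst y"
  have ts: "ts = (\<Sum>q\<in>S. u q *\<^sub>R fst q)" unfolding ts_def uy[symmetric] by (simp add: fst_sum)
  have ws: "snd (snd y) = (\<Sum>q\<in>S. u q * (norm (fst q))\<^sup>2) - (\<Sum>q\<in>S. u q * (norm (fst (snd q) - z))\<^sup>2)"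
    unfolding uy[symmetric] by (simp add: snd_sum w right_diff_distrib sum_subtractf norm_minus_commute)
  have A: "(\<Sum>q\<in>S. \<Sum>r\<in>S. u q * u r * (norm (fst q - fst r))\<^sup>2) \<le> (\<Sum>q\<in>S. \<Sum>r\<in>S. u q * u r * (norm ((fst (snd q) - z) - (fst (snd r) - z)))\<^sup>2)"
    by (intro sum_mono mult_left_mono) (use u0 ne in \<open>auto intro: power_mono\<close>)
  have B1: "(\<Sum>q\<in>S. \<Sum>r\<in>S. u q * u r * (norm (fst q - fst r))\<^sup>2) = 2 * (\<Sum>q\<in>S. u q * (norm (fst q))\<^sup>2) - 2 * (norm ts)\<^sup>2"
    unfolding ts by (rule dsum[OF fin u1])
  have B2: "(\<Sum>q\<in>S. \<Sum>r\<in>S. u q * u r * (norm ((fst (snd q) - z) - (fst (snd r) - z)))\<^sup>2) = 2 * (\<Sum>q\<in>S. u q * (norm (fst (snd q) - z))\<^sup>2) - 2 * (norm (\<Sum>q\<in>S. u q *\<^sub>R (fst (snd q) - z)))\<^sup>2"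
    by (rule dsum[OF fin u1])
  have psi0: "\<Psi> y \<le> 0"
  proof -
    have p: "\<Psi> y = snd (snd y) - (norm ts)\<^sup>2" by (simp add: \<Psi>_def ts_def)
    have "0 \<le> (norm (\<Sum>q\<in>S. u q *\<^sub>R (fst (snd q) - z)))\<^sup>2" by simp
    then show ?thesis using A B1 B2 ws p by linarith
  qed
  show ?thesis
  proof (intro exI ballI)
    fix q assume qS: "q \<in> S"
    show "norm (ts - fst q) \<le> norm (z - fst (snd q))"
    proof (rule ccontr)
      assume "\<not> ?thesis"
      then have "(norm (z - fst (snd q)))\<^sup>2 < (norm (ts - fst q))\<^sup>2"
        by (intro power_strict_mono) auto
      define D where "D = (norm (fst q - ts))\<^sup>2 - (norm (z - fst (snd q)))\<^sup>2 - \<Psi> y"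
      have Dpos: "D > 0" using psi0 \<open>_ < _\<close> unfolding D_def by (simp add: norm_minus_commute)
      define N where "N = (norm (fst q - ts))\<^sup>2 + 1"
      have Npos: "N > 0" unfolding N_def by (simp add: add_nonneg_pos)
      define e where "e = min 1 (D / (2 * N))"
      have e0: "e > 0" unfolding e_def using Dpos Npos by simp
      have e1: "e \<le> 1" unfolding e_def by simp
      have eD: "e * N \<le> D / 2"
      proof -
        have "e \<le> D / (2 * N)" unfolding e_def by simp
        then have "e * (2 * N) \<le> D" using Npos by (simp add: pos_le_divide_eq)
        then show ?thesis by simp
      qed
      define y' where "y' = (1 - e) *\<^sub>R y + e *\<^sub>R q"
      have "y' \<in> K" unfolding y'_def K_def
        using convexD[OF convex_convex_hull, of y S q "1 - e" e] yK[unfolded K_def] hull_inc[OF qS] e0 e1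
        by auto
      have fy': "fst y' = ts + e *\<^sub>R (fst q - ts)" unfolding y'_def ts_def by (simp add: algebra_simps)
      have h1: "snd (snd y') = (1 - e) * snd (snd y) + e * snd (snd q)" unfolding y'_def by simp
      have h2: "(norm (fst y'))\<^sup>2 = (norm ts)\<^sup>2 + 2 * e * inner ts (fst q - ts) + e\<^sup>2 * (norm (fst q - ts))\<^sup>2"
        unfolding fy' by (rule norm_add_scale)
      have h3: "(norm (fst q - ts))\<^sup>2 = (norm (fst q))\<^sup>2 - 2 * inner (fst q) ts + (norm ts)\<^sup>2"
        by (simp add: power2_norm_eq_inner inner_diff_left inner_diff_right inner_commute)
      have h4: "inner ts (fst q - ts) = inner (fst q) ts - (norm ts)\<^sup>2"
        by (simp add: power2_norm_eq_inner inner_diff_right inner_commute)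
      have "\<Psi> y' = \<Psi> y + e * D - e\<^sup>2 * (norm (fst q - ts))\<^sup>2"
        unfolding \<Psi>_def D_def h1 h2 h4 w[OF qS] ts_def[symmetric] 
        by (simp add: h3 algebra_simps)
      moreover have "e\<^sup>2 * (norm (fst q - ts))\<^sup>2 < e * D"
      proof -
        have "e\<^sup>2 * (norm (fst q - ts))\<^sup>2 \<le> e * (e * N)" unfolding N_def power2_eq_square using e0
          by (simp add: mult_left_mono)
        also have "\<dots> \<le> e * (D / 2)" using eD e0 by (simp add: mult_left_mono)
        also have "\<dots> < e * D" using e0 Dpos by simp
        finally show ?thesis .
      qed
      ultimately have "\<Psi> y' > \<Psi> y" by simp
      with ymax[OF \<open>y' \<in> K\<close>] show False by simp
    qed
  qed
qed

lemma cauchy_from_bound: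
  fixes f :: "nat \<Rightarrow> 'a::real_normed_vector"
  assumes b: "\<And>n k. n \<le> k \<Longrightarrow> (norm (f n - f k))\<^sup>2 \<le> 6 / real (Suc n)"
  shows "Cauchy f"
proof (rule metric_CauchyI)
  fix e :: real assume e: "e > 0"
  then have "e\<^sup>2 / 6 > 0" by simp
  then obtain N where N: "inverse (real (Suc N)) < e\<^sup>2 / 6" using reals_Archimedean by blast
  have key: "norm (f m - f n) < e" if "N \<le> m" "m \<le> n" for m n
  proof -
    have "(norm (f m - f n))\<^sup>2 \<le> 6 / real (Suc m)" using b that by simp
    also have "\<dots> \<le> 6 / real (Suc N)" using that by (simp add: divide_left_mono)
    also have "\<dots> < e\<^sup>2" using N by (simp add: field_simps)
    finally show ?thesis using e by (smt (verit) power_mono norm_ge_zero)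
  qed
  show "\<exists>M. \<forall>m\<ge>M. \<forall>n\<ge>M. dist (f m) (f n) < e"
  proof (intro exI allI impI)
    fix m n assume "N \<le> m" "N \<le> n"
    then show "dist (f m) (f n) < e"
      using key[of m n] key[of n m] by (cases "m \<le> n") (auto simp: dist_norm norm_minus_commute)
  qed
qed

lemma null_from_bound:
  fixes f :: "nat \<Rightarrow> 'a::real_normed_vector"
  assumes b: "\<And>n. (norm (f n))\<^sup>2 \<le> 6 / real (Suc n)"
  shows "f \<longlonglongrightarrow> 0"
proof (rule Lim_null_comparison)
  show "\<forall>\<^sub>F n in sequentially. norm (f n) \<le> sqrt (6 / real (Suc n))"
    using b by (simp add: real_le_rsqrt)
  have "(\<lambda>n. 6 * inverse (real (Suc n))) \<longlonglongrightarrow> 6 * 0"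
    by (intro tendsto_mult tendsto_const LIMSEQ_inverse_real_of_nat)
  then have "(\<lambda>n. sqrt (6 / real (Suc n))) \<longlonglongrightarrow> sqrt 0"
    by (intro tendsto_real_sqrt) (simp add: divide_inverse)
  then show "(\<lambda>n. sqrt (6 / real (Suc n))) \<longlonglongrightarrow> 0" by simp
qed

lemma parallelogram_sq:
  fixes p q :: "'a::real_inner"
  shows "(norm (p - q))\<^sup>2 + (norm (p + q))\<^sup>2 = 2 * (norm p)\<^sup>2 + 2 * (norm q)\<^sup>2"
  unfolding power2_norm_eq_inner by (simp add: inner_add_left inner_add_right inner_diff_left inner_diff_right inner_commute)

lemma inf_ext:
  fixes X :: "('a::{real_inner,complete_space} \<times> 'a) set" and z :: 'a
  assumes ne: "\<And>q r. q \<in> X \<Longrightarrow> r \<in> X \<Longrightarrow> norm (fst q - fst r) \<le> norm (snd q - snd r)"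
  shows "\<exists>t. \<forall>q\<in>X. norm (t - fst q) \<le> norm (z - snd q)"
proof (cases "X = {}")
  case True then show ?thesis by auto
next
  case False
  then obtain x0 where x0: "x0 \<in> X" by blast
  define Sf :: "('a \<times> 'a) set \<Rightarrow> 'a set" where "Sf F = {t. \<forall>q\<in>F. norm (t - fst q) \<le> norm (z - snd q)}" for F
  define m :: "('a \<times> 'a) set \<Rightarrow> real" where "m F = Inf ((\<lambda>t. (norm t)\<^sup>2) ` Sf F)" for F
  define R where "R = (norm (fst x0) + norm (z - snd x0))\<^sup>2"
  have Sne: "Sf F \<noteq> {}" if "finite F" "F \<subseteq> X" for F
  proof -
    let ?S = "(\<lambda>q. (fst q, snd q, (norm (fst q))\<^sup>2 - (norm (z - snd q))\<^sup>2)) ` F"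
    have "\<exists>t. \<forall>q\<in>?S. norm (t - fst q) \<le> norm (z - fst (snd q))"
      proof (rule finite_ext)
      have nF: "\<And>a b c d. (a,b)\<in>F \<Longrightarrow> (c,d)\<in>F \<Longrightarrow> norm (a-c) \<le> norm (b-d)"
        using ne that by (metis fst_conv snd_conv subsetD)
      show "\<And>q r. q \<in> ?S \<Longrightarrow> r \<in> ?S \<Longrightarrow> norm (fst q - fst r) \<le> norm (fst (snd q) - fst (snd r))"
        using nF by auto
    qed (use that in auto)
    then show ?thesis unfolding Sf_def by auto
  qed
  have Santi: "Sf G \<subseteq> Sf F" if "F \<subseteq> G" for F G using that unfolding Sf_def by auto
  have Smid: "(1/2) *\<^sub>R (p + q) \<in> Sf F" if "p \<in> Sf F" "q \<in> Sf F" for p q F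
  proof -
    have "norm ((1/2) *\<^sub>R (p + q) - fst x) \<le> norm (z - snd x)" if x: "x \<in> F" for x
    proof -
      have "(1/2) *\<^sub>R (p + q) - fst x = (1/2) *\<^sub>R ((p - fst x) + (q - fst x))" by (simp add: algebra_simps flip: scaleR_add_left)
      then have "norm ((1/2) *\<^sub>R (p + q) - fst x) = (1/2) * norm ((p - fst x) + (q - fst x))" by simp
      also have "\<dots> \<le> (1/2) * (norm (p - fst x) + norm (q - fst x))"
        by (intro mult_left_mono norm_triangle_ineq) auto
      also have "\<dots> \<le> norm (z - snd x)" using \<open>p \<in> Sf F\<close> \<open>q \<in> Sf F\<close> x unfolding Sf_def by fastforce
      finally show ?thesis .
    qed
    then show ?thesis unfolding Sf_def by auto
  qed
  have bdd: "bdd_below ((\<lambda>t. (norm t)\<^sup>2) ` Sf F)" for F by (rule bdd_belowI[of _ 0]) auto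
  have mlow: "m F \<le> (norm t)\<^sup>2" if "t \<in> Sf F" for t F unfolding m_def using bdd that by (intro cInf_lower) auto
  have mmono: "m F \<le> m G" if "F \<subseteq> G" "finite G" "G \<subseteq> X" for F G
    unfolding m_def using Sne[OF that(2,3)] Santi[OF that(1)] bdd by (intro cInf_superset_mono) auto
  have mnear: "\<exists>t\<in>Sf F. (norm t)\<^sup>2 < m F + d" if "finite F" "F \<subseteq> X" "d > 0" for F d
  proof (rule ccontr)
    assume "\<not> ?thesis"
    then have h: "\<forall>t\<in>Sf F. m F + d \<le> (norm t)\<^sup>2" by auto
    have "m F + d \<le> m F" unfolding m_def[of F]
      by (rule cInf_greatest) (use Sne[OF that(1,2)] h in \<open>auto simp: m_def\<close>)
    with that show False by simp
  qed
  have mR: "m F \<le> R" if FF: "finite F" "F \<subseteq> X" for F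
  proof -
    obtain t where t: "t \<in> Sf (insert x0 F)" using Sne[of "insert x0 F"] FF x0 by auto
    have "norm t \<le> norm (fst x0) + norm (t - fst x0)" by (rule norm_triangle_sub)
    also have "norm (t - fst x0) \<le> norm (z - snd x0)" using t unfolding Sf_def by auto
    finally have "(norm t)\<^sup>2 \<le> R" unfolding R_def by (intro power_mono) auto
    moreover have "m F \<le> m (insert x0 F)" by (rule mmono) (use FF x0 in auto)
    moreover have "m (insert x0 F) \<le> (norm t)\<^sup>2" by (rule mlow[OF t])
    ultimately show ?thesis by linarith
  qed
  define Mset where "Mset = {m F | F. finite F \<and> F \<subseteq> X}"
  define M where "M = Sup Mset"
  have Mne: "Mset \<noteq> {}" unfolding Mset_def by auto
  have Mbdd: "bdd_above Mset" unfolding Mset_def using mR by (intro bdd_aboveI[of _ R]) auto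
  have mM: "m F \<le> M" if "finite F" "F \<subseteq> X" for F
    unfolding M_def by (rule cSup_upper[OF _ Mbdd]) (use that in \<open>auto simp: Mset_def\<close>)
  have ex: "\<exists>F. finite F \<and> F \<subseteq> X \<and> M - 1/real (Suc n) < m F" for n
  proof (rule ccontr)
    assume "\<not> ?thesis"
    then have h: "\<forall>y\<in>Mset. y \<le> M - 1/real (Suc n)" unfolding Mset_def by (auto simp: not_less)
    have "Sup Mset \<le> M - 1/real (Suc n)" by (rule cSup_least[OF Mne]) (use h in auto)
    then show False by (simp add: M_def)
  qed
  then obtain Fp where Fp: "\<And>n. finite (Fp n) \<and> Fp n \<subseteq> X \<and> M - 1/real (Suc n) < m (Fp n)" by metis
  define Fn where "Fn n = (\<Union>k\<le>n. Fp k)" for n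
  have Fn_fin: "finite (Fn n)" for n unfolding Fn_def using Fp by auto
  have Fn_X: "Fn n \<subseteq> X" for n unfolding Fn_def using Fp by auto
  have Fn_mono: "Fn n \<subseteq> Fn k" if "n \<le> k" for n k unfolding Fn_def using that by (intro UN_mono) auto
  have Fn_good: "M - 1/real (Suc n) < m (Fn n)" for n
  proof -
    have "m (Fp n) \<le> m (Fn n)" by (rule mmono[OF _ Fn_fin Fn_X]) (auto simp: Fn_def)
    then show ?thesis using Fp[of n] by linarith
  qed
  have "\<forall>n. \<exists>t. t \<in> Sf (Fn n) \<and> (norm t)\<^sup>2 < m (Fn n) + 1/real (Suc n)"
    proof
      fix n :: nat
      have "1/real (Suc n) > 0" by simp
      from mnear[OF Fn_fin Fn_X this] show "\<exists>t. t \<in> Sf (Fn n) \<and> (norm t)\<^sup>2 < m (Fn n) + 1/real (Suc n)" by blast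
    qed
  from choice[OF this] obtain p where p: "\<And>n. p n \<in> Sf (Fn n) \<and> (norm (p n))\<^sup>2 < m (Fn n) + 1/real (Suc n)"
    by blast
  have para: "(norm (p n - q))\<^sup>2 \<le> 6/real (Suc n)" if "q \<in> Sf (Fn n)" "(norm q)\<^sup>2 \<le> M + 1/real (Suc n)" for n q
  proof -
    have mid: "m (Fn n) \<le> (norm ((1/2) *\<^sub>R (p n + q)))\<^sup>2" by (rule mlow[OF Smid]) (use p that in auto)
    have h2: "(norm ((1/2) *\<^sub>R (p n + q)))\<^sup>2 = (norm (p n + q))\<^sup>2 / 4" by (simp add: power2_eq_square)
    have par: "(norm (p n - q))\<^sup>2 + (norm (p n + q))\<^sup>2 = 2*(norm (p n))\<^sup>2 + 2*(norm q)\<^sup>2"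
      by (rule parallelogram_sq)
    have "6/real (Suc n) = 6 * (1/real (Suc n))" by simp
    then show ?thesis using mid h2 par p[of n] that(2) mM[OF Fn_fin Fn_X, of n] Fn_good[of n] by linarith
  qed
  have pbound: "(norm (p n - p k))\<^sup>2 \<le> 6/real (Suc n)" if "n \<le> k" for n k
  proof (rule para)
    show "p k \<in> Sf (Fn n)" using p[of k] Santi[OF Fn_mono[OF that]] by auto
    have "1/real (Suc k) \<le> 1/real (Suc n)" using that by (simp add: frac_le)
    then show "(norm (p k))\<^sup>2 \<le> M + 1/real (Suc n)" using p[of k] mM[OF Fn_fin Fn_X, of k] by linarith
  qed
  have "Cauchy p" by (rule cauchy_from_bound[OF pbound])
  then obtain l where l: "p \<longlonglongrightarrow> l" using Cauchy_convergent convergent_def by blast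
  show ?thesis
  proof (intro exI ballI)
    fix x assume xX: "x \<in> X"
    define G where "G n = insert x (Fn n)" for n
    have G_fin: "finite (G n)" and G_X: "G n \<subseteq> X" for n using Fn_fin Fn_X xX by (auto simp: G_def)
    have "\<forall>n. \<exists>t. t \<in> Sf (G n) \<and> (norm t)\<^sup>2 < m (G n) + 1/real (Suc n)"
      proof
      fix n :: nat
      have "1/real (Suc n) > 0" by simp
      from mnear[OF G_fin G_X this] show "\<exists>t. t \<in> Sf (G n) \<and> (norm t)\<^sup>2 < m (G n) + 1/real (Suc n)" by blast
    qed
    from choice[OF this] obtain q where q: "\<And>n. q n \<in> Sf (G n) \<and> (norm (q n))\<^sup>2 < m (G n) + 1/real (Suc n)"
      by blast
    have "(norm (p n - q n))\<^sup>2 \<le> 6/real (Suc n)" for n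
    proof (rule para)
      show "q n \<in> Sf (Fn n)" using q[of n] Santi[of "Fn n" "G n"] by (auto simp: G_def)
      show "(norm (q n))\<^sup>2 \<le> M + 1/real (Suc n)" using q[of n] mM[OF G_fin G_X, of n] by linarith
    qed
    then have "(\<lambda>n. p n - q n) \<longlonglongrightarrow> 0" by (rule null_from_bound)
    then have "(\<lambda>n. p n - (p n - q n)) \<longlonglongrightarrow> l - 0" by (intro tendsto_diff l)
    then have "(\<lambda>n. norm (q n - fst x)) \<longlonglongrightarrow> norm (l - fst x)" by (intro tendsto_intros) simp
    moreover have "\<forall>n. norm (q n - fst x) \<le> norm (z - snd x)" using q unfolding Sf_def G_def by auto
    ultimately show "norm (l - fst x) \<le> norm (z - snd x)" by (intro LIMSEQ_le_const2) auto
  qed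
qed

lemma sq_diff_sum:
  fixes x y :: "'a::real_inner"
  shows "(norm (x - y))\<^sup>2 = (norm (x + y))\<^sup>2 - 4 * inner x y"
  unfolding power2_norm_eq_inner by (simp add: inner_add_left inner_add_right inner_diff_left inner_diff_right inner_commute)

lemma minty:
  fixes A :: "'a::{real_inner,complete_space} \<Rightarrow> 'a set"
  assumes mm: "maximally_monotone A" and g: "\<gamma> > 0"
  shows "\<exists>p. \<exists>u\<in>A p. z = p + \<gamma> *\<^sub>R u"
proof -
  have mon: "\<And>x y u v. u \<in> A x \<Longrightarrow> v \<in> A y \<Longrightarrow> inner (x - y) (u - v) \<ge> 0"
    using mm unfolding maximally_monotone_def monotone_op_def by blast
  define X where "X = {(a - \<gamma> *\<^sub>R u, a + \<gamma> *\<^sub>R u) | a u. u \<in> A a}"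
  have "norm (fst q - fst r) \<le> norm (snd q - snd r)" if qX: "q \<in> X" "r \<in> X" for q r
  proof -
    obtain a u where q: "q = (a - \<gamma> *\<^sub>R u, a + \<gamma> *\<^sub>R u)" "u \<in> A a" using qX(1) unfolding X_def by blast
    obtain b v where r: "r = (b - \<gamma> *\<^sub>R v, b + \<gamma> *\<^sub>R v)" "v \<in> A b" using qX(2) unfolding X_def by blast
    have i: "inner (a - b) (\<gamma> *\<^sub>R u - \<gamma> *\<^sub>R v) \<ge> 0"
      using mon[OF q(2) r(2)] g by (simp add: scaleR_diff_right[symmetric])
    have e1: "fst q - fst r = (a - b) - (\<gamma> *\<^sub>R u - \<gamma> *\<^sub>R v)" using q r by (simp add: algebra_simps)
    have e2: "snd q - snd r = (a - b) + (\<gamma> *\<^sub>R u - \<gamma> *\<^sub>R v)" using q r by (simp add: algebra_simps)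
    have "(norm (fst q - fst r))\<^sup>2 \<le> (norm (snd q - snd r))\<^sup>2"
      unfolding e1 e2 sq_diff_sum using i by simp
    then show ?thesis by (rule power2_le_imp_le) simp
  qed
  then obtain t where t: "\<forall>q\<in>X. norm (t - fst q) \<le> norm (z - snd q)" using inf_ext by blast
  define p where "p = (1/2) *\<^sub>R (z + t)"
  define w where "w = (1/2) *\<^sub>R (z - t)"
  have zpw: "z = p + w" unfolding p_def w_def by (simp add: algebra_simps flip: scaleR_add_left)
  have tpw: "t = p - w" unfolding p_def w_def by (simp add: algebra_simps flip: scaleR_add_left)
  have key: "inner (p - a) ((1/\<gamma>) *\<^sub>R w - u) \<ge> 0" if ua: "u \<in> A a" for a u
  proof -
    have "(a - \<gamma> *\<^sub>R u, a + \<gamma> *\<^sub>R u) \<in> X" unfolding X_def using ua by auto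
    with t have n: "norm (t - (a - \<gamma> *\<^sub>R u)) \<le> norm (z - (a + \<gamma> *\<^sub>R u))" by auto
    have e1: "t - (a - \<gamma> *\<^sub>R u) = (p - a) - (w - \<gamma> *\<^sub>R u)" unfolding tpw by (simp add: algebra_simps)
    have e2: "z - (a + \<gamma> *\<^sub>R u) = (p - a) + (w - \<gamma> *\<^sub>R u)" unfolding zpw by (simp add: algebra_simps)
    have "(norm (t - (a - \<gamma> *\<^sub>R u)))\<^sup>2 \<le> (norm (z - (a + \<gamma> *\<^sub>R u)))\<^sup>2"
      using n by (intro power_mono) auto
    then have "inner (p - a) (w - \<gamma> *\<^sub>R u) \<ge> 0" unfolding e1 e2 sq_diff_sum by simp
    moreover have "(1/\<gamma>) *\<^sub>R w - u = (1/\<gamma>) *\<^sub>R (w - \<gamma> *\<^sub>R u)" using g by (simp add: algebra_simps)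
    ultimately show ?thesis using g by simp
  qed
  define w' where "w' = (1/\<gamma>) *\<^sub>R w"
  define B where "B x = (if x = p then insert w' (A x) else A x)" for x
  have "monotone_op B" unfolding monotone_op_def
  proof (intro allI impI)
    fix x y u v assume u: "u \<in> B x" and v: "v \<in> B y"
    from u have u': "u \<in> A x \<or> (x = p \<and> u = w')" unfolding B_def by (auto split: if_splits)
    from v have v': "v \<in> A y \<or> (y = p \<and> v = w')" unfolding B_def by (auto split: if_splits)
    show "inner (x - y) (u - v) \<ge> 0"
    proof (cases "u \<in> A x")
      case True
      show ?thesis
      proof (cases "v \<in> A y")
        case True with \<open>u \<in> A x\<close> show ?thesis by (rule mon)
      next
        case False
        with v' have "y = p" "v = w'" by auto
        have "inner (x - y) (u - v) = inner (p - x) (w' - u)"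
          using \<open>y = p\<close> \<open>v = w'\<close> by (metis inner_minus_left inner_minus_right minus_diff_eq minus_minus)
        then show ?thesis using key[OF \<open>u \<in> A x\<close>] w'_def by simp
      qed
    next
      case False
      with u' have "x = p" "u = w'" by auto
      show ?thesis
      proof (cases "v \<in> A y")
        case True then show ?thesis using key[OF True] \<open>x = p\<close> \<open>u = w'\<close> w'_def by simp
      next
        case False
        with v' have "y = p" "v = w'" by auto
        then show ?thesis using \<open>x = p\<close> \<open>u = w'\<close> by simp
      qed
    qed
  qed
  moreover have "\<forall>x. A x \<subseteq> B x" unfolding B_def by auto
  ultimately have "B = A" using mm unfolding maximally_monotone_def by blast
  then have "B p = A p" by simp
  then have "w' \<in> A p" unfolding B_def by auto
  moreover have "z = p + \<gamma> *\<^sub>R w'" unfolding w'_def zpw using g by simp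
  ultimately show ?thesis by blast
qed

lemma resolvent_char:
  fixes A :: "'a::{real_inner,complete_space} \<Rightarrow> 'a set"
  assumes mm: "maximally_monotone A" and g: "\<gamma> > 0"
  shows "\<exists>u\<in>A (resolvent \<gamma> A z). z = resolvent \<gamma> A z + \<gamma> *\<^sub>R u"
proof -
  have mon: "\<And>x y u v. u \<in> A x \<Longrightarrow> v \<in> A y \<Longrightarrow> inner (x - y) (u - v) \<ge> 0"
    using mm unfolding maximally_monotone_def monotone_op_def by blast
  obtain p where p: "\<exists>u\<in>A p. z = p + \<gamma> *\<^sub>R u" using minty[OF mm g] by blast
  have uniq: "q = p" if hq: "\<exists>v\<in>A q. z = q + \<gamma> *\<^sub>R v" for q
  proof -
    obtain u where u: "u \<in> A p" "z = p + \<gamma> *\<^sub>R u" using p by blast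
    obtain v where v: "v \<in> A q" "z = q + \<gamma> *\<^sub>R v" using hq by blast
    have "\<gamma> *\<^sub>R (u - v) = q - p" using u v by (simp add: algebra_simps)
    have "u - v = (1/\<gamma>) *\<^sub>R (\<gamma> *\<^sub>R (u - v))" using g by simp
    also have "\<dots> = (1/\<gamma>) *\<^sub>R (q - p)" using \<open>\<gamma> *\<^sub>R (u - v) = q - p\<close> by simp
    finally have "u - v = (1/\<gamma>) *\<^sub>R (q - p)" .
    then have "inner (p - q) (u - v) = (1/\<gamma>) * inner (p - q) (q - p)" by simp
    also have "inner (p - q) (q - p) = - inner (p - q) (p - q)"
      using inner_minus_right[of "p - q" "p - q"] by simp
    finally have "inner (p - q) (u - v) = - (1/\<gamma>) * (inner (p - q) (p - q))" by simp
    moreover have "inner (p - q) (u - v) \<ge> 0" by (rule mon[OF u(1) v(1)])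
    ultimately have "(1/\<gamma>) * inner (p - q) (p - q) \<le> 0" by linarith
    then have "inner (p - q) (p - q) \<le> 0" using g by (simp add: divide_le_0_iff)
    then show ?thesis by (metis inner_gt_zero_iff right_minus_eq not_less)
  qed
  have "resolvent \<gamma> A z = p" unfolding resolvent_def
    by (rule the_equality[where P="\<lambda>p. \<exists>u\<in>A p. z = p + \<gamma> *\<^sub>R u", OF p uniq])
  then show ?thesis using p by simp
qed

theorem proposition4p8:
  fixes A :: "'a::{real_inner, complete_space} \<Rightarrow> 'a set"
    and C :: "'a set" and \<phi> :: "real \<Rightarrow> real" and \<gamma> :: real
  assumes "C \<noteq> {}"
    and "mono_on {0..} \<phi>"
    and "\<forall>t\<ge>0. \<phi> t \<ge> 0"
    and "\<forall>t\<ge>0. \<phi> t = 0 \<longleftrightarrow> t = 0"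
    and "maximally_monotone A"
    and "uniformly_monotone_on C \<phi> A"
    and "\<gamma> > 0"
    and "resolvent \<gamma> A ` C \<subseteq> C"
  shows "uniformly_firmly_nonexpansive_on C (\<lambda>t. \<gamma> * \<phi> t) (resolvent \<gamma> A)"
proof -
  let ?J = "resolvent \<gamma> A"
  have um: "\<And>x y u v. x \<in> C \<Longrightarrow> y \<in> C \<Longrightarrow> u \<in> A x \<Longrightarrow> v \<in> A y \<Longrightarrow> inner (x - y) (u - v) \<ge> \<phi> (norm (x - y))"
    using assms(6) unfolding uniformly_monotone_on_def by blast
  show ?thesis unfolding uniformly_firmly_nonexpansive_on_def
  proof (intro conjI ballI)
    show "?J ` C \<subseteq> C" by (rule assms(8))
    fix x y t assume xC: "x \<in> C" and yC: "y \<in> C" and t: "t \<in> {0..1::real}"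
    obtain u where u: "u \<in> A (?J x)" "x = ?J x + \<gamma> *\<^sub>R u" using resolvent_char[OF assms(5,7)] by blast
    obtain v where v: "v \<in> A (?J y)" "y = ?J y + \<gamma> *\<^sub>R v" using resolvent_char[OF assms(5,7)] by blast
    have JC: "?J x \<in> C" "?J y \<in> C" using assms(8) xC yC by auto
    define b where "b = ?J x - ?J y"
    define a where "a = x - y"
    have ab: "a - b = \<gamma> *\<^sub>R (u - v)" unfolding a_def b_def
      by (subst u(2), subst v(2)) (simp add: algebra_simps)
    have i: "inner b (a - b) \<ge> \<gamma> * \<phi> (norm b)"
    proof -
      have "inner b (a - b) = \<gamma> * inner b (u - v)" unfolding ab by simp
      moreover have "inner b (u - v) \<ge> \<phi> (norm b)" unfolding b_def by (rule um[OF JC u(1) v(1)])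
      ultimately show ?thesis using assms(7) by simp
    qed
    have e: "(1 - t) *\<^sub>R x + t *\<^sub>R ?J x - ((1 - t) *\<^sub>R y + t *\<^sub>R ?J y) = b + (1 - t) *\<^sub>R (a - b)"
      unfolding a_def b_def by (simp add: algebra_simps)
    have t1: "1 - t \<ge> 0" using t by simp
    have "(1 - t) * (\<gamma> * \<phi> (norm b)) \<le> (1 - t) * inner b (a - b)" by (rule mult_left_mono[OF i t1])
    moreover have "0 \<le> (1 - t)\<^sup>2 * (norm (a - b))\<^sup>2" by simp
    ultimately show "(norm (?J x - ?J y))\<^sup>2 \<le> (norm ((1 - t) *\<^sub>R x + t *\<^sub>R ?J x - ((1 - t) *\<^sub>R y + t *\<^sub>R ?J y)))\<^sup>2 - 2 * (1 - t) * (\<gamma> * \<phi> (norm (?J x - ?J y)))"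
      unfolding e norm_add_scale b_def[symmetric] by linarith
  qed
qed

end
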